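(* Let $G$ be a multiplicative Lie algebra with $G\cong E/\mathcal Z(E)$ for some multiplicative Lie algebra $E$. If $\mathcal Z(E\otimes E)=(\mathcal Z(E)\otimes E)(E\otimes\mathcal Z(E))$, then $G\otimes G$ is Lie capable.
   Context: A multiplicative Lie algebra is a group $(G,\cdot)$ with a binary operation $\star$ such that for all $x,y,z\in G$: $x\star x=1$; $x\star(yz)=(x\star y)\,{}^y(x\star z)$; $(xy)\star z={}^x(y\star z)(x\star z)$; $((x\star y)\star{}^yz)((y\star z)\star{}^zx)((z\star x)\star{}^xy)=1$; ${}^z(x\star y)={}^zx\star{}^zy$, where ${}^xy=xyx^{-1}$. $Z(G)$ is the group center, $LZ(G)=\{x: x\star y=1\ \forall y\}$, $\mathcal Z(G)=LZ(G)\cap Z(G)$. $G$ is Lie capable if $G\cong E/\mathcal Z(E)$ for some multiplicative Lie algebra $E$. The tensor square $G\otimes G$ is the multiplicative Lie algebra generated by symbols $x\otimes y$ ($x,y\in G$) subject to, for all $x,x',y,y'\in G$: $x\otimes(yy')=(x\otimes y)({}^yx\otimes{}^yy')$; $(xx')\otimes y=({}^xx'\otimes{}^xy)(x\otimes y)$; $((x\star x')\otimes{}^{x'}y)({}^yx\otimes(x'\star y))^{-1}({}^xx'\otimes(x\star y)^{-1})^{-1}=1$; $({}^{y'}x\otimes(y\star y'))((y\star x)^{-1}\otimes{}^yy')^{-1}((y'\star x)\otimes{}^xy)^{-1}=1$; and $(x\otimes y)\star(x'\otimes y')=(y\star x)^{-1}\otimes(x'\star y')$. For an ideal $I$ of $E$,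 $I\otimes E$ (resp. $E\otimes I$) denotes the subgroup of $E\otimes E$ generated by all $a\otimes b$ with $a\in I,b\in E$ (resp. $a\in E,b\in I$). *)

theory Defs
  imports "HOL-Algebra.Algebra"
begin

record 'a mlie = "'a monoid" +
  lstar :: "'a \<Rightarrow> 'a \<Rightarrow> 'a"

definition mconj :: "('a, 'b) monoid_scheme \<Rightarrow> 'a \<Rightarrow> 'a \<Rightarrow> 'a" where
  "mconj G x y = x \<otimes>\<^bsub>G\<^esub> y \<otimes>\<^bsub>G\<^esub> inv\<^bsub>G\<^esub> x"

definition mult_lie_alg :: "('a, 'b) mlie_scheme \<Rightarrow> bool" where
  "mult_lie_alg G \<longleftrightarrow> group G
   \<and> (\<forall>x\<in>carrier G. \<forall>y\<in>carrier G. lstar G x y \<in> carrier G)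
   \<and> (\<forall>x\<in>carrier G. lstar G x x = \<one>\<^bsub>G\<^esub>)
   \<and> (\<forall>x\<in>carrier G. \<forall>y\<in>carrier G. \<forall>z\<in>carrier G.
        lstar G x (y \<otimes>\<^bsub>G\<^esub> z) = lstar G x y \<otimes>\<^bsub>G\<^esub> mconj G y (lstar G x z))
   \<and> (\<forall>x\<in>carrier G. \<forall>y\<in>carrier G. \<forall>z\<in>carrier G.
        lstar G (x \<otimes>\<^bsub>G\<^esub> y) z = mconj G x (lstar G y z) \<otimes>\<^bsub>G\<^esub> lstar G x z)
   \<and> (\<forall>x\<in>carrier G. \<forall>y\<in>carrier G. \<forall>z\<in>carrier G.
        lstar G (lstar G x y) (mconj G y z) \<otimes>\<^bsub>G\<^esub> lstar G (lstar G y z) (mconj G z x)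
          \<otimes>\<^bsub>G\<^esub> lstar G (lstar G z x) (mconj G x y) = \<one>\<^bsub>G\<^esub>)
   \<and> (\<forall>x\<in>carrier G. \<forall>y\<in>carrier G. \<forall>z\<in>carrier G.
        mconj G z (lstar G x y) = lstar G (mconj G z x) (mconj G z y))"

definition gcenter :: "('a, 'b) monoid_scheme \<Rightarrow> 'a set" where
  "gcenter G = {x \<in> carrier G. \<forall>y\<in>carrier G. x \<otimes>\<^bsub>G\<^esub> y = y \<otimes>\<^bsub>G\<^esub> x}"

definition lie_center :: "('a, 'b) mlie_scheme \<Rightarrow> 'a set" where
  "lie_center G = {x \<in> carrier G. \<forall>y\<in>carrier G. lstar G x y = \<one>\<^bsub>G\<^esub>}"

definition zcal :: "('a, 'b) mlie_scheme \<Rightarrow> 'a set" where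
  "zcal G = lie_center G \<inter> gcenter G"

text \<open>Quotient multiplicative Lie algebra E/N (right cosets as in HOL-Algebra's G Mod N);
  the Lie product of cosets is the coset of the Lie product of representatives.\<close>
definition mlie_quot :: "('a, 'b) mlie_scheme \<Rightarrow> 'a set \<Rightarrow> 'a set mlie" where
  "mlie_quot E N = \<lparr> carrier = rcosets\<^bsub>E\<^esub> N, monoid.mult = set_mult E, one = N,
     lstar = (\<lambda>A B. N #>\<^bsub>E\<^esub> lstar E (SOME a. a \<in> A) (SOME b. b \<in> B)) \<rparr>"

definition mlie_iso :: "('a, 'b) mlie_scheme \<Rightarrow> ('c, 'd) mlie_scheme \<Rightarrow> ('a \<Rightarrow> 'c) set" where
  "mlie_iso G H = {h \<in> iso G H. \<forall>x\<in>carrier G. \<forall>y\<in>carrier G.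
      h (lstar G x y) = lstar H (h x) (h y)}"

definition mlie_is_iso :: "('a, 'b) mlie_scheme \<Rightarrow> ('c, 'd) mlie_scheme \<Rightarrow> bool" where
  "mlie_is_iso G H \<longleftrightarrow> mlie_iso G H \<noteq> {}"

text \<open>Lie capability, with the witness E ranging over a given HOL type 'c.\<close>
definition lie_capable_in :: "'c itself \<Rightarrow> ('a, 'b) mlie_scheme \<Rightarrow> bool" where
  "lie_capable_in (T::'c itself) G \<longleftrightarrow>
     (\<exists>E :: 'c mlie. mult_lie_alg E \<and> mlie_is_iso G (mlie_quot E (zcal E)))"

text \<open>Terms of the free multiplicative Lie algebra on symbols x (x) y.\<close>
datatype 'a tterm = TGen 'a 'a | TOne | TMul "'a tterm" "'a tterm" | TInv "'a tterm"
  | TStar "'a tterm" "'a tterm"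

definition tconj :: "'a tterm \<Rightarrow> 'a tterm \<Rightarrow> 'a tterm" where
  "tconj x y = TMul (TMul x y) (TInv x)"

fun twf :: "'a set \<Rightarrow> 'a tterm \<Rightarrow> bool" where
  "twf A (TGen x y) \<longleftrightarrow> x \<in> A \<and> y \<in> A"
| "twf A TOne \<longleftrightarrow> True"
| "twf A (TMul s t) \<longleftrightarrow> twf A s \<and> twf A t"
| "twf A (TInv s) \<longleftrightarrow> twf A s"
| "twf A (TStar s t) \<longleftrightarrow> twf A s \<and> twf A t"

text \<open>The smallest congruence on terms making the quotient a multiplicative Lie algebra
  and satisfying the defining relations of the tensor square.\<close>
inductive teq :: "('a, 'b) mlie_scheme \<Rightarrow> 'a tterm \<Rightarrow> 'a tterm \<Rightarrow> bool" for G where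
  refl: "teq G t t"
| sym: "teq G s t \<Longrightarrow> teq G t s"
| trans: "teq G s t \<Longrightarrow> teq G t u \<Longrightarrow> teq G s u"
| cong_mul: "teq G s s' \<Longrightarrow> teq G t t' \<Longrightarrow> teq G (TMul s t) (TMul s' t')"
| cong_inv: "teq G s s' \<Longrightarrow> teq G (TInv s) (TInv s')"
| cong_star: "teq G s s' \<Longrightarrow> teq G t t' \<Longrightarrow> teq G (TStar s t) (TStar s' t')"
| assoc: "teq G (TMul (TMul x y) z) (TMul x (TMul y z))"
| lunit: "teq G (TMul TOne x) x"
| linv: "teq G (TMul (TInv x) x) TOne"
| ax1: "teq G (TStar x x) TOne"
| ax2: "teq G (TStar x (TMul y z)) (TMul (TStar x y) (tconj y (TStar x z)))"
| ax3: "teq G (TStar (TMul x y) z) (TMul (tconj x (TStar y z)) (TStar x z))"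
| ax4: "teq G (TMul (TMul (TStar (TStar x y) (tconj y z)) (TStar (TStar y z) (tconj z x)))
                 (TStar (TStar z x) (tconj x y))) TOne"
| ax5: "teq G (tconj z (TStar x y)) (TStar (tconj z x) (tconj z y))"
| rel1: "\<lbrakk>x \<in> carrier G; y \<in> carrier G; y' \<in> carrier G\<rbrakk> \<Longrightarrow>
    teq G (TGen x (y \<otimes>\<^bsub>G\<^esub> y')) (TMul (TGen x y) (TGen (mconj G y x) (mconj G y y')))"
| rel2: "\<lbrakk>x \<in> carrier G; x' \<in> carrier G; y \<in> carrier G\<rbrakk> \<Longrightarrow>
    teq G (TGen (x \<otimes>\<^bsub>G\<^esub> x') y) (TMul (TGen (mconj G x x') (mconj G x y)) (TGen x y))"
| rel3: "\<lbrakk>x \<in> carrier G; x' \<in> carrier G; y \<in> carrier G\<rbrakk> \<Longrightarrow>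
    teq G (TMul (TMul (TGen (lstar G x x') (mconj G x' y))
                      (TInv (TGen (mconj G y x) (lstar G x' y))))
                (TInv (TGen (mconj G x x') (inv\<^bsub>G\<^esub> (lstar G x y))))) TOne"
| rel4: "\<lbrakk>x \<in> carrier G; y \<in> carrier G; y' \<in> carrier G\<rbrakk> \<Longrightarrow>
    teq G (TMul (TMul (TGen (mconj G y' x) (lstar G y y'))
                      (TInv (TGen (inv\<^bsub>G\<^esub> (lstar G y x)) (mconj G y y'))))
                (TInv (TGen (lstar G y' x) (mconj G x y)))) TOne"
| rel5: "\<lbrakk>x \<in> carrier G; y \<in> carrier G; x' \<in> carrier G; y' \<in> carrier G\<rbrakk> \<Longrightarrow>
    teq G (TStar (TGen x y) (TGen x' y')) (TGen (inv\<^bsub>G\<^esub> (lstar G y x)) (lstar G x' y'))"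

definition tcls :: "('a, 'b) mlie_scheme \<Rightarrow> 'a tterm \<Rightarrow> 'a tterm set" where
  "tcls G t = {s. teq G t s}"

definition tensor_sq :: "('a, 'b) mlie_scheme \<Rightarrow> 'a tterm set mlie" where
  "tensor_sq G = \<lparr> carrier = {tcls G t | t. twf (carrier G) t},
     monoid.mult = (\<lambda>A B. tcls G (TMul (SOME a. a \<in> A) (SOME b. b \<in> B))),
     one = tcls G TOne,
     lstar = (\<lambda>A B. tcls G (TStar (SOME a. a \<in> A) (SOME b. b \<in> B))) \<rparr>"

definition tgen :: "('a, 'b) mlie_scheme \<Rightarrow> 'a \<Rightarrow> 'a \<Rightarrow> 'a tterm set" where
  "tgen G a b = tcls G (TGen a b)"

definition tens_left :: "('a, 'b) mlie_scheme \<Rightarrow> 'a set \<Rightarrow> 'a tterm set set" where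
  "tens_left E I = generate (tensor_sq E) {tgen E a b | a b. a \<in> I \<and> b \<in> carrier E}"

definition tens_right :: "('a, 'b) mlie_scheme \<Rightarrow> 'a set \<Rightarrow> 'a tterm set set" where
  "tens_right E I = generate (tensor_sq E) {tgen E a b | a b. a \<in> carrier E \<and> b \<in> I}"

end

theory Submission imports Defs begin


locale mla =
  fixes M :: "('a,'b) mlie_scheme" (structure)
  assumes mla: "mult_lie_alg M"

sublocale mla \<subseteq> group M using mla unfolding mult_lie_alg_def by blast

context group begin
lemma gs1: "x \<in> carrier G \<Longrightarrow> a \<in> carrier G \<Longrightarrow> inv x \<otimes> (x \<otimes> a) = a"
  by (simp add: m_assoc[symmetric])
lemma gs2: "x \<in> carrier G \<Longrightarrow> a \<in> carrier G \<Longrightarrow> x \<otimes> (inv x \<otimes> a) = a"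
  by (simp add: m_assoc[symmetric])
lemmas gsimps = m_assoc gs1 gs2
lemma c2: "x \<in> carrier G \<Longrightarrow> y \<in> carrier G \<Longrightarrow> y \<otimes> x = x \<otimes> y \<Longrightarrow> x \<otimes> y \<otimes> inv x = y"
proof -
  assume x: "x \<in> carrier G" and y: "y \<in> carrier G" and h: "y \<otimes> x = x \<otimes> y"
  have "x \<otimes> y \<otimes> inv x = y \<otimes> x \<otimes> inv x" using h by simp
  also have "\<dots> = y" using x y by (simp add: gsimps)
  finally show ?thesis .
qed
lemma c4: "x \<in> carrier G \<Longrightarrow> z \<in> carrier G \<Longrightarrow> x \<otimes> z = z \<otimes> x \<Longrightarrow> inv x \<otimes> z = z \<otimes> inv x"
proof -
  assume x: "x \<in> carrier G" and z: "z \<in> carrier G" and h: "x \<otimes> z = z \<otimes> x"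
  have "inv x \<otimes> z = inv x \<otimes> (z \<otimes> x) \<otimes> inv x" using x z by (simp add: gsimps)
  also have "\<dots> = inv x \<otimes> (x \<otimes> z) \<otimes> inv x" using h by simp
  also have "\<dots> = z \<otimes> inv x" using x z by (simp add: gsimps)
  finally show ?thesis .
qed
end

context mla
begin

lemma mconj_eq: "mconj M x y = x \<otimes> y \<otimes> inv x" by (simp add: mconj_def)

lemma star_closed[simp]: "x \<in> carrier M \<Longrightarrow> y \<in> carrier M \<Longrightarrow> lstar M x y \<in> carrier M"
  using mla unfolding mult_lie_alg_def by blast
lemma star_self[simp]: "x \<in> carrier M \<Longrightarrow> lstar M x x = \<one>"
  using mla unfolding mult_lie_alg_def by blast
lemma star_mr: "x \<in> carrier M \<Longrightarrow> y \<in> carrier M \<Longrightarrow> z \<in> carrier M \<Longrightarrow>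
   lstar M x (y \<otimes> z) = lstar M x y \<otimes> (y \<otimes> lstar M x z \<otimes> inv y)"
  using mla unfolding mult_lie_alg_def mconj_def by blast
lemma star_ml: "x \<in> carrier M \<Longrightarrow> y \<in> carrier M \<Longrightarrow> z \<in> carrier M \<Longrightarrow>
   lstar M (x \<otimes> y) z = (x \<otimes> lstar M y z \<otimes> inv x) \<otimes> lstar M x z"
  using mla unfolding mult_lie_alg_def mconj_def by blast
lemma conj_star: "x \<in> carrier M \<Longrightarrow> y \<in> carrier M \<Longrightarrow> z \<in> carrier M \<Longrightarrow>
   z \<otimes> lstar M x y \<otimes> inv z = lstar M (z \<otimes> x \<otimes> inv z) (z \<otimes> y \<otimes> inv z)"
  using mla unfolding mult_lie_alg_def mconj_def by blast

lemma conj_one_iff: "x \<in> carrier M \<Longrightarrow> a \<in> carrier M \<Longrightarrow> x \<otimes> a \<otimes> inv x = \<one> \<longleftrightarrow> a = \<one>"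
proof
  assume x: "x \<in> carrier M" and a: "a \<in> carrier M" and h: "x \<otimes> a \<otimes> inv x = \<one>"
  have "inv x \<otimes> (x \<otimes> a \<otimes> inv x) \<otimes> x = a" using x a by (simp add: gsimps)
  then show "a = \<one>" using h x by simp
qed simp

lemma star_antisym0: assumes x: "x \<in> carrier M" and y: "y \<in> carrier M"
  shows "lstar M y x \<otimes> lstar M x y = \<one>"
proof -
  have "\<one> = lstar M (x \<otimes> y) (x \<otimes> y)" using x y by simp
  also have "\<dots> = (x \<otimes> lstar M y (x \<otimes> y) \<otimes> inv x) \<otimes> lstar M x (x \<otimes> y)"
    using x y star_ml[of x y "x \<otimes> y"] by simp
  also have "lstar M y (x \<otimes> y) = lstar M y x" using x y by (simp add: star_mr)
  also have "lstar M x (x \<otimes> y) = x \<otimes> lstar M x y \<otimes> inv x" using x y by (simp add: star_mr)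
  also have "(x \<otimes> lstar M y x \<otimes> inv x) \<otimes> (x \<otimes> lstar M x y \<otimes> inv x)
     = x \<otimes> (lstar M y x \<otimes> lstar M x y) \<otimes> inv x" using x y by (simp add: gsimps)
  finally show ?thesis using x y conj_one_iff[of x "lstar M y x \<otimes> lstar M x y"] by simp
qed

lemma star_antisym: "x \<in> carrier M \<Longrightarrow> y \<in> carrier M \<Longrightarrow> lstar M x y = inv (lstar M y x)"
  using inv_equality[OF star_antisym0[of y x]] by simp

lemma zcalD: "n \<in> zcal M \<Longrightarrow> n \<in> carrier M"
  "n \<in> zcal M \<Longrightarrow> y \<in> carrier M \<Longrightarrow> n \<otimes> y = y \<otimes> n"
  "n \<in> zcal M \<Longrightarrow> y \<in> carrier M \<Longrightarrow> lstar M n y = \<one>"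
  by (auto simp: zcal_def lie_center_def gcenter_def)

lemma zcalD': "n \<in> zcal M \<Longrightarrow> y \<in> carrier M \<Longrightarrow> y \<otimes> n = n \<otimes> y"
  using zcalD(2)[of n y] by simp

lemma zcal_star_r: "n \<in> zcal M \<Longrightarrow> y \<in> carrier M \<Longrightarrow> lstar M y n = \<one>"
  using star_antisym[of y n] by (simp add: zcalD)

lemma zcal_conj: "n \<in> zcal M \<Longrightarrow> y \<in> carrier M \<Longrightarrow> n \<otimes> y \<otimes> inv n = y"
  by (rule c2) (simp_all add: zcalD zcalD')

lemma star_zl: "n \<in> zcal M \<Longrightarrow> x \<in> carrier M \<Longrightarrow> y \<in> carrier M \<Longrightarrow> lstar M (n \<otimes> x) y = lstar M x y"
  by (simp add: star_ml zcalD zcal_conj)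

lemma star_zr: "n \<in> zcal M \<Longrightarrow> x \<in> carrier M \<Longrightarrow> y \<in> carrier M \<Longrightarrow> lstar M x (n \<otimes> y) = lstar M x y"
  by (simp add: star_mr zcalD zcal_conj zcal_star_r)

lemma star_one_l: "y \<in> carrier M \<Longrightarrow> lstar M \<one> y = \<one>"
proof -
  assume y: "y \<in> carrier M"
  have "lstar M \<one> y = lstar M \<one> y \<otimes> lstar M \<one> y" using y star_ml[of \<one> \<one> y] by simp
  then show ?thesis using y by simp
qed

lemma zcal_subgroup: "subgroup (zcal M) M"
proof
  show "zcal M \<subseteq> carrier M" using zcalD by blast
  show "\<one> \<in> zcal M" by (simp add: zcal_def lie_center_def gcenter_def star_one_l)
  fix x y assume x: "x \<in> zcal M" and y: "y \<in> zcal M"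
  have xc: "x \<in> carrier M" and yc: "y \<in> carrier M" using x y zcalD by auto
  have "x \<otimes> y \<otimes> z = z \<otimes> (x \<otimes> y)" if "z \<in> carrier M" for z
  proof -
    have "x \<otimes> y \<otimes> z = x \<otimes> (z \<otimes> y)" using that x y xc yc zcalD(2)[OF y that] by (simp add: m_assoc)
    also have "\<dots> = (x \<otimes> z) \<otimes> y" using that xc yc by (simp add: m_assoc)
    also have "\<dots> = z \<otimes> (x \<otimes> y)" using that x xc yc zcalD(2)[OF x that] by (simp add: m_assoc)
    finally show ?thesis .
  qed
  moreover have "lstar M (x \<otimes> y) z = \<one>" if "z \<in> carrier M" for z
    using that x y xc yc by (simp add: star_ml zcalD)
  ultimately show "x \<otimes> y \<in> zcal M" using xc yc
    by (auto simp: zcal_def lie_center_def gcenter_def)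
  have "inv x \<otimes> z = z \<otimes> inv x" if "z \<in> carrier M" for z
    using that x xc zcalD(2)[OF x that] by (intro c4) simp_all
  moreover have "lstar M (inv x) z = \<one>" if z: "z \<in> carrier M" for z
  proof -
    have "\<one> = lstar M (x \<otimes> inv x) z" using xc z by (simp add: star_one_l)
    also have "\<dots> = x \<otimes> lstar M (inv x) z \<otimes> inv x" using xc z x star_ml[of x "inv x" z] by (simp add: zcalD)
    finally show ?thesis using conj_one_iff[of x "lstar M (inv x) z"] xc z by simp
  qed
  ultimately show "inv x \<in> zcal M" using xc
    by (auto simp: zcal_def lie_center_def gcenter_def)
qed

lemma zcal_normal: "zcal M \<lhd> M"
  unfolding normal_inv_iff
proof (intro conjI ballI zcal_subgroup)
  fix x h assume x: "x \<in> carrier M" and h: "h \<in> zcal M"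
  have "x \<otimes> h \<otimes> inv x = h" using x h zcalD(1) zcalD'[OF h x] by (intro c2) simp_all
  then show "x \<otimes> h \<otimes> inv x \<in> zcal M" using h by simp
qed


lemma star_coset: "x \<in> carrier M \<Longrightarrow> y \<in> carrier M \<Longrightarrow> x' \<in> zcal M #> x \<Longrightarrow> y' \<in> zcal M #> y
   \<Longrightarrow> lstar M x' y' = lstar M x y"
  by (auto simp: r_coset_def star_zl star_zr zcalD)

lemma star_coset_eq: "x \<in> carrier M \<Longrightarrow> y \<in> carrier M \<Longrightarrow> x' \<in> carrier M \<Longrightarrow> y' \<in> carrier M \<Longrightarrow>
   zcal M #> x = zcal M #> x' \<Longrightarrow> zcal M #> y = zcal M #> y'
   \<Longrightarrow> lstar M x' y' = lstar M x y"
  using star_coset[of x y x' y'] repr_independenceD[OF zcal_subgroup, of x' x] repr_independenceD[OF zcal_subgroup, of y' y]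
  by simp

end

lemma group_transfer:
  assumes "group G" "carrier H = carrier G" "monoid.mult H = monoid.mult G" "one H = one G"
  shows "group H"
  using assms unfolding group_def group_axioms_def monoid_def Units_def by simp

lemma inv_transfer:
  assumes "carrier H = carrier G" "monoid.mult H = monoid.mult G" "one H = one G"
  shows "inv\<^bsub>H\<^esub> x = inv\<^bsub>G\<^esub> x"
  using assms unfolding m_inv_def by simp

lemma mlie_quot_simps[simp]: "carrier (mlie_quot E N) = rcosets\<^bsub>E\<^esub> N"
  "monoid.mult (mlie_quot E N) = set_mult E" "one (mlie_quot E N) = N"
  by (simp_all add: mlie_quot_def)

context mla
begin

abbreviation "QM \<equiv> mlie_quot M (zcal M)"

lemma QM_group: "group QM"
  by (rule group_transfer[OF normal.factorgroup_is_group[OF zcal_normal]]) (simp_all add: FactGroup_def)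

lemma QM_inv: "inv\<^bsub>QM\<^esub> Y = inv\<^bsub>M Mod zcal M\<^esub> Y"
  by (rule inv_transfer) (simp_all add: FactGroup_def)

lemma QM_hom: "(\<lambda>a. zcal M #> a) \<in> hom M QM"
  using normal.r_coset_hom_Mod[OF zcal_normal] by (simp add: hom_def FactGroup_def)

lemma QM_mult: "x \<in> carrier M \<Longrightarrow> y \<in> carrier M \<Longrightarrow>
  (zcal M #> x) \<otimes>\<^bsub>QM\<^esub> (zcal M #> y) = zcal M #> (x \<otimes> y)"
  using QM_hom by (simp add: hom_mult)

lemma QM_mult': "x \<in> carrier M \<Longrightarrow> y \<in> carrier M \<Longrightarrow>
  (zcal M #> x) <#> (zcal M #> y) = zcal M #> (x \<otimes> y)"
  using QM_mult by simp

lemma QM_inv_coset: "x \<in> carrier M \<Longrightarrow> inv\<^bsub>QM\<^esub> (zcal M #> x) = zcal M #> inv x"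
  using group_hom.hom_inv[of M QM "\<lambda>a. zcal M #> a"] QM_hom QM_group
  by (simp add: group_hom_def group_hom_axioms_def is_group)

lemma QM_one: "\<one>\<^bsub>QM\<^esub> = zcal M #> \<one>"
  by (simp add: coset_join2 zcal_subgroup subgroup.one_closed)

lemma QM_star: "x \<in> carrier M \<Longrightarrow> y \<in> carrier M \<Longrightarrow>
  lstar QM (zcal M #> x) (zcal M #> y) = zcal M #> lstar M x y"
proof -
  assume x: "x \<in> carrier M" and y: "y \<in> carrier M"
  have "(SOME a. a \<in> zcal M #> x) \<in> zcal M #> x"
    by (rule someI[of _ x]) (simp add: rcos_self x zcal_subgroup)
  moreover have "(SOME a. a \<in> zcal M #> y) \<in> zcal M #> y"
    by (rule someI[of _ y]) (simp add: rcos_self y zcal_subgroup)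
  ultimately show ?thesis using x y by (simp add: mlie_quot_def star_coset)
qed

lemma QM_carrier: "carrier QM = {zcal M #> x | x. x \<in> carrier M}"
  by (auto simp: RCOSETS_def)

end



lemma tcls_eq: "tcls G s = tcls G t \<longleftrightarrow> teq G s t"
proof
  assume "tcls G s = tcls G t"
  then have "t \<in> tcls G s" by (simp add: tcls_def teq.refl)
  then show "teq G s t" by (simp add: tcls_def)
next
  assume "teq G s t"
  then show "tcls G s = tcls G t"
    by (auto simp: tcls_def intro: teq.trans teq.sym)
qed

lemma teq_some: "teq G t (SOME a. a \<in> tcls G t)"
proof -
  have "(SOME a. a \<in> tcls G t) \<in> tcls G t" by (rule someI[of _ t]) (simp add: tcls_def teq.refl)
  then show ?thesis by (simp add: tcls_def)
qed

lemma tcls_some[simp]: "tcls G (SOME a. a \<in> tcls G t) = tcls G t"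
  by (simp add: tcls_eq teq.sym[OF teq_some])

lemma T_carrier: "carrier (tensor_sq G) = {tcls G t | t. twf (carrier G) t}"
  by (simp add: tensor_sq_def)

lemma T_carrierI: "twf (carrier G) t \<Longrightarrow> tcls G t \<in> carrier (tensor_sq G)"
  by (auto simp: tensor_sq_def)

lemma T_carrierE: "x \<in> carrier (tensor_sq G) \<Longrightarrow> (\<And>t. twf (carrier G) t \<Longrightarrow> x = tcls G t \<Longrightarrow> P) \<Longrightarrow> P"
  by (auto simp: tensor_sq_def)

lemma T_mult: "tcls G s \<otimes>\<^bsub>tensor_sq G\<^esub> tcls G t = tcls G (TMul s t)"
  unfolding tensor_sq_def by (auto simp: tcls_eq intro!: teq.cong_mul teq.sym[OF teq_some])

lemma T_star: "lstar (tensor_sq G) (tcls G s) (tcls G t) = tcls G (TStar s t)"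
  unfolding tensor_sq_def by (auto simp: tcls_eq intro!: teq.cong_star teq.sym[OF teq_some])

lemma T_one: "\<one>\<^bsub>tensor_sq G\<^esub> = tcls G TOne"
  by (simp add: tensor_sq_def)

lemma T_group: "group (tensor_sq G)"
proof (rule groupI)
  fix x y assume "x \<in> carrier (tensor_sq G)" "y \<in> carrier (tensor_sq G)"
  then show "x \<otimes>\<^bsub>tensor_sq G\<^esub> y \<in> carrier (tensor_sq G)"
    by (elim T_carrierE) (simp add: T_mult T_carrierI)
next
  show "\<one>\<^bsub>tensor_sq G\<^esub> \<in> carrier (tensor_sq G)" by (auto simp: T_one intro!: T_carrierI)
next
  fix x y z assume "x \<in> carrier (tensor_sq G)" "y \<in> carrier (tensor_sq G)" "z \<in> carrier (tensor_sq G)"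
  then show "x \<otimes>\<^bsub>tensor_sq G\<^esub> y \<otimes>\<^bsub>tensor_sq G\<^esub> z = x \<otimes>\<^bsub>tensor_sq G\<^esub> (y \<otimes>\<^bsub>tensor_sq G\<^esub> z)"
    by (elim T_carrierE) (simp add: T_mult tcls_eq teq.assoc)
next
  fix x assume "x \<in> carrier (tensor_sq G)"
  then show "\<one>\<^bsub>tensor_sq G\<^esub> \<otimes>\<^bsub>tensor_sq G\<^esub> x = x"
    by (elim T_carrierE) (simp add: T_mult T_one tcls_eq teq.lunit)
next
  fix x assume "x \<in> carrier (tensor_sq G)"
  then show "\<exists>y\<in>carrier (tensor_sq G). y \<otimes>\<^bsub>tensor_sq G\<^esub> x = \<one>\<^bsub>tensor_sq G\<^esub>"
  proof (elim T_carrierE)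
    fix t assume "twf (carrier G) t" "x = tcls G t"
    then show ?thesis
      by (intro bexI[of _ "tcls G (TInv t)"]) (simp_all add: T_mult T_one tcls_eq teq.linv T_carrierI)
  qed
qed

lemma T_inv: "twf (carrier G) t \<Longrightarrow> inv\<^bsub>tensor_sq G\<^esub> (tcls G t) = tcls G (TInv t)"
  by (rule group.inv_equality[OF T_group]) (auto simp: T_mult T_one tcls_eq teq.linv intro!: T_carrierI)

lemma T_mconj: "twf (carrier G) s \<Longrightarrow> twf (carrier G) t \<Longrightarrow>
   mconj (tensor_sq G) (tcls G s) (tcls G t) = tcls G (tconj s t)"
  by (simp add: mconj_def T_inv T_mult tconj_def)

lemma T_mla: "mult_lie_alg (tensor_sq G)"
  unfolding mult_lie_alg_def
proof (intro conjI ballI)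
  show "group (tensor_sq G)" by (rule T_group)
  fix x y z assume x: "x \<in> carrier (tensor_sq G)" and y: "y \<in> carrier (tensor_sq G)" and z: "z \<in> carrier (tensor_sq G)"
  from x obtain a where a: "twf (carrier G) a" "x = tcls G a" by (auto elim: T_carrierE)
  from y obtain b where b: "twf (carrier G) b" "y = tcls G b" by (auto elim: T_carrierE)
  from z obtain c where c: "twf (carrier G) c" "z = tcls G c" by (auto elim: T_carrierE)
  note defs = a b c
  show "lstar (tensor_sq G) x y \<in> carrier (tensor_sq G)"
    using defs by (auto simp: T_star intro!: T_carrierI)
  show "lstar (tensor_sq G) x (y \<otimes>\<^bsub>tensor_sq G\<^esub> z) =
        lstar (tensor_sq G) x y \<otimes>\<^bsub>tensor_sq G\<^esub> mconj (tensor_sq G) y (lstar (tensor_sq G) x z)"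
    using defs by (simp add: T_star T_mult T_mconj tcls_eq teq.ax2)
  show "lstar (tensor_sq G) (x \<otimes>\<^bsub>tensor_sq G\<^esub> y) z =
        mconj (tensor_sq G) x (lstar (tensor_sq G) y z) \<otimes>\<^bsub>tensor_sq G\<^esub> lstar (tensor_sq G) x z"
    using defs by (simp add: T_star T_mult T_mconj tcls_eq teq.ax3)
  show "lstar (tensor_sq G) (lstar (tensor_sq G) x y) (mconj (tensor_sq G) y z) \<otimes>\<^bsub>tensor_sq G\<^esub>
        lstar (tensor_sq G) (lstar (tensor_sq G) y z) (mconj (tensor_sq G) z x) \<otimes>\<^bsub>tensor_sq G\<^esub>
        lstar (tensor_sq G) (lstar (tensor_sq G) z x) (mconj (tensor_sq G) x y) = \<one>\<^bsub>tensor_sq G\<^esub>"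
    using defs by (simp add: T_star T_mult T_mconj T_one tcls_eq teq.ax4)
  show "mconj (tensor_sq G) z (lstar (tensor_sq G) x y) =
        lstar (tensor_sq G) (mconj (tensor_sq G) z x) (mconj (tensor_sq G) z y)"
    using defs by (simp add: T_star T_mult T_mconj tcls_eq teq.ax5)
next
  fix x assume x: "x \<in> carrier (tensor_sq G)"
  then show "lstar (tensor_sq G) x x = \<one>\<^bsub>tensor_sq G\<^esub>"
    by (elim T_carrierE) (simp add: T_star T_one tcls_eq teq.ax1)
qed



fun tmap :: "'a set \<Rightarrow> ('a \<Rightarrow> 'c) \<Rightarrow> 'a tterm \<Rightarrow> 'c tterm" where
  "tmap A f (TGen x y) = (if x \<in> A \<and> y \<in> A then TGen (f x) (f y) else TOne)"
| "tmap A f TOne = TOne"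
| "tmap A f (TMul s t) = TMul (tmap A f s) (tmap A f t)"
| "tmap A f (TInv s) = TInv (tmap A f s)"
| "tmap A f (TStar s t) = TStar (tmap A f s) (tmap A f t)"

lemma tmap_tconj[simp]: "tmap A f (tconj x y) = tconj (tmap A f x) (tmap A f y)"
  by (simp add: tconj_def)

lemma tmap_twf: "(\<And>x. x \<in> A \<Longrightarrow> f x \<in> B) \<Longrightarrow> twf B (tmap A f t)"
  by (induction t) auto

lemma tmap_id: "twf A t \<Longrightarrow> (\<And>x. x \<in> A \<Longrightarrow> g (f x) = x) \<Longrightarrow> (\<And>x. x \<in> A \<Longrightarrow> f x \<in> B) \<Longrightarrow>
   tmap B g (tmap A f t) = t"
  by (induction t) auto

lemma teq_hom:
  assumes E: "mult_lie_alg E" and G: "mult_lie_alg G"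
  and f: "\<And>x. x\<in>carrier E \<Longrightarrow> f x \<in> carrier G"
  and fm: "\<And>x y. x\<in>carrier E \<Longrightarrow> y\<in>carrier E \<Longrightarrow> f (x \<otimes>\<^bsub>E\<^esub> y) = f x \<otimes>\<^bsub>G\<^esub> f y"
  and fi: "\<And>x. x\<in>carrier E \<Longrightarrow> f (inv\<^bsub>E\<^esub> x) = inv\<^bsub>G\<^esub> (f x)"
  and fs: "\<And>x y. x\<in>carrier E \<Longrightarrow> y\<in>carrier E \<Longrightarrow> f (lstar E x y) = lstar G (f x) (f y)"
  and st: "teq E s t"
  shows "teq G (tmap (carrier E) f s) (tmap (carrier E) f t)"
proof -
  interpret e: mla E by (unfold_locales) (rule E)
  interpret g: mla G by (unfold_locales) (rule G)
  have mc: "mconj E x y \<in> carrier E" if "x \<in> carrier E" "y \<in> carrier E" for x y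
    using that by (simp add: mconj_def)
  have fc: "f (mconj E x y) = mconj G (f x) (f y)" if "x \<in> carrier E" "y \<in> carrier E" for x y
    using that by (simp add: mconj_def fm fi)
  note simps = mc fc f fm fi fs
  from st show ?thesis
  proof (induction rule: teq.induct)
    case (rel1 x y y')
    then show ?case using teq.rel1[of "f x" G "f y" "f y'"] by (simp add: simps)
  next
    case (rel2 x x' y)
    then show ?case using teq.rel2[of "f x" G "f x'" "f y"] by (simp add: simps)
  next
    case (rel3 x x' y)
    then show ?case using teq.rel3[of "f x" G "f x'" "f y"] by (simp add: simps)
  next
    case (rel4 x y y')
    then show ?case using teq.rel4[of "f x" G "f y" "f y'"] by (simp add: simps)
  next
    case (rel5 x y x' y')
    then show ?case using teq.rel5[of "f x" G "f y" "f x'" "f y'"] by (simp add: simps)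
  qed (auto intro: teq.intros)
qed



locale setting =
  fixes G :: "'a mlie" and E :: "'e mlie" and \<phi> :: "'a \<Rightarrow> 'e set"
  assumes G: "mult_lie_alg G" and E: "mult_lie_alg E"
    and phi: "\<phi> \<in> mlie_iso G (mlie_quot E (zcal E))"
    and NZ: "zcal (tensor_sq E) =
           tens_left E (zcal E) <#>\<^bsub>tensor_sq E\<^esub> tens_right E (zcal E)"
begin

interpretation e: mla E by unfold_locales (rule E)
interpretation g: mla G by unfold_locales (rule G)
interpretation t: mla "tensor_sq E" by unfold_locales (rule T_mla)

abbreviation "ZE \<equiv> zcal E"
abbreviation "QE \<equiv> mlie_quot E (zcal E)"

lemma phi_hom: "\<phi> \<in> hom G QE" and phi_bij: "bij_betw \<phi> (carrier G) (carrier QE)"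
  and phi_star: "\<And>x y. x \<in> carrier G \<Longrightarrow> y \<in> carrier G \<Longrightarrow> \<phi> (lstar G x y) = lstar QE (\<phi> x) (\<phi> y)"
  using phi by (auto simp: mlie_iso_def iso_def)

lemma phi_gh: "group_hom G QE \<phi>"
  using phi_hom e.QM_group by (simp add: group_hom_def group_hom_axioms_def g.is_group)

lemma phi_closed: "x \<in> carrier G \<Longrightarrow> \<phi> x \<in> carrier QE"
  using phi_hom by (auto simp: hom_def)

lemma phi_mult: "x \<in> carrier G \<Longrightarrow> y \<in> carrier G \<Longrightarrow> \<phi> (x \<otimes>\<^bsub>G\<^esub> y) = \<phi> x \<otimes>\<^bsub>QE\<^esub> \<phi> y"
  using phi_hom by (simp add: hom_mult)

lemma phi_inv: "x \<in> carrier G \<Longrightarrow> \<phi> (inv\<^bsub>G\<^esub> x) = inv\<^bsub>QE\<^esub> (\<phi> x)"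
  using group_hom.hom_inv[OF phi_gh] by simp

lemma phi_one: "\<phi> \<one>\<^bsub>G\<^esub> = ZE"
  using group_hom.hom_one[OF phi_gh] by simp

lemma phi_inj: "x \<in> carrier G \<Longrightarrow> y \<in> carrier G \<Longrightarrow> \<phi> x = \<phi> y \<Longrightarrow> x = y"
  using phi_bij by (auto simp: bij_betw_def inj_on_def)

definition rep :: "'a \<Rightarrow> 'e" where "rep g = (SOME a. a \<in> \<phi> g)"

lemma rep: assumes g: "g \<in> carrier G" shows "rep g \<in> carrier E" "ZE #>\<^bsub>E\<^esub> rep g = \<phi> g"
proof -
  obtain e where e: "e \<in> carrier E" "\<phi> g = ZE #>\<^bsub>E\<^esub> e"
    using phi_closed[OF g] by (auto simp: RCOSETS_def)
  have "rep g \<in> ZE #>\<^bsub>E\<^esub> e" unfolding rep_def e(2)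
    by (rule someI[of _ e]) (simp add: e.rcos_self e.zcal_subgroup e(1))
  then show "rep g \<in> carrier E" "ZE #>\<^bsub>E\<^esub> rep g = \<phi> g"
    using e subgroup.elemrcos_carrier[OF e.zcal_subgroup e.is_group e(1)]
      e.repr_independence[OF _ e(1) e.zcal_subgroup] by auto
qed

definition psi :: "'e set \<Rightarrow> 'a" where "psi = inv_into (carrier G) \<phi>"
definition pr :: "'e \<Rightarrow> 'a" where "pr x = psi (ZE #>\<^bsub>E\<^esub> x)"

lemma pr: assumes x: "x \<in> carrier E" shows "pr x \<in> carrier G" "\<phi> (pr x) = ZE #>\<^bsub>E\<^esub> x"
proof -
  have c: "ZE #>\<^bsub>E\<^esub> x \<in> carrier QE" using x by (simp add: e.rcosetsI e.zcal_subgroup subgroup.subset)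
  then show "pr x \<in> carrier G" "\<phi> (pr x) = ZE #>\<^bsub>E\<^esub> x"
    using phi_bij by (auto simp: pr_def psi_def bij_betw_def inv_into_into f_inv_into_f)
qed

lemma pr_mult: "x \<in> carrier E \<Longrightarrow> y \<in> carrier E \<Longrightarrow> pr (x \<otimes>\<^bsub>E\<^esub> y) = pr x \<otimes>\<^bsub>G\<^esub> pr y"
  by (rule phi_inj) (simp_all add: pr phi_mult e.QM_mult')

lemma pr_inv: "x \<in> carrier E \<Longrightarrow> pr (inv\<^bsub>E\<^esub> x) = inv\<^bsub>G\<^esub> pr x"
  by (rule phi_inj) (simp_all add: pr phi_inv e.QM_inv_coset)

lemma pr_star: "x \<in> carrier E \<Longrightarrow> y \<in> carrier E \<Longrightarrow> pr (lstar E x y) = lstar G (pr x) (pr y)"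
  by (rule phi_inj) (simp_all add: pr phi_star e.QM_star)

lemma pr_z: "z \<in> ZE \<Longrightarrow> pr z = \<one>\<^bsub>G\<^esub>"
  by (rule phi_inj) (simp_all add: pr e.zcalD phi_one e.coset_join2 e.zcal_subgroup)

lemma pr_rep: "g \<in> carrier G \<Longrightarrow> pr (rep g) = g"
  by (rule phi_inj) (simp_all add: pr rep)

end


inductive tapx :: "('e \<Rightarrow> 'e \<Rightarrow> bool) \<Rightarrow> 'e tterm \<Rightarrow> 'e tterm \<Rightarrow> bool" for R where
  tg: "R a a' \<Longrightarrow> R b b' \<Longrightarrow> tapx R (TGen a b) (TGen a' b')"
| t1: "tapx R TOne TOne"
| tm: "tapx R s s' \<Longrightarrow> tapx R t t' \<Longrightarrow> tapx R (TMul s t) (TMul s' t')"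
| ti: "tapx R s s' \<Longrightarrow> tapx R (TInv s) (TInv s')"
| ts: "tapx R s s' \<Longrightarrow> tapx R t t' \<Longrightarrow> tapx R (TStar s t) (TStar s' t')"

lemma tapx_tconj: "tapx R x x' \<Longrightarrow> tapx R y y' \<Longrightarrow> tapx R (tconj x y) (tconj x' y')"
  by (simp add: tconj_def tapx.intros)

context setting
begin


abbreviation "TE \<equiv> tensor_sq E"
abbreviation "TG \<equiv> tensor_sq G"
abbreviation "NT \<equiv> zcal (tensor_sq E)"

definition Om :: "'e tterm \<Rightarrow> 'a tterm" where "Om = tmap (carrier E) pr"
definition Ph :: "'a tterm \<Rightarrow> 'e tterm" where "Ph = tmap (carrier G) rep"

definition Th :: "'e tterm set \<Rightarrow> 'a tterm set" where "Th A = tcls G (Om (SOME a. a \<in> A))"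

interpretation e: mla E by unfold_locales (rule E)
interpretation g: mla G by unfold_locales (rule G)
interpretation t: mla "tensor_sq E" by unfold_locales (rule T_mla)
interpretation tg: group "tensor_sq G" by (rule T_group)

lemma Om_simps[simp]: "Om (TMul s t) = TMul (Om s) (Om t)" "Om (TInv s) = TInv (Om s)"
  "Om (TStar s t) = TStar (Om s) (Om t)" "Om TOne = TOne" "Om (tconj s t) = tconj (Om s) (Om t)"
  by (simp_all add: Om_def)

lemma Ph_simps[simp]: "Ph (TMul s t) = TMul (Ph s) (Ph t)" "Ph (TInv s) = TInv (Ph s)"
  "Ph (TStar s t) = TStar (Ph s) (Ph t)" "Ph TOne = TOne" "Ph (tconj s t) = tconj (Ph s) (Ph t)"
  by (simp_all add: Ph_def)

lemma Om_teq: "teq E s t \<Longrightarrow> teq G (Om s) (Om t)"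
  unfolding Om_def by (rule teq_hom[OF E G]) (simp_all add: pr pr_mult pr_inv pr_star)

lemma Om_twf: "twf (carrier G) (Om t)"
  unfolding Om_def by (rule tmap_twf) (simp add: pr)

lemma Ph_twf: "twf (carrier E) (Ph t)"
  unfolding Ph_def by (rule tmap_twf) (simp add: rep)

lemma Om_Ph: "twf (carrier G) s \<Longrightarrow> Om (Ph s) = s"
  unfolding Om_def Ph_def by (rule tmap_id) (simp_all add: pr_rep rep)


lemma Th_cls: "Th (tcls E t) = tcls G (Om t)"
  unfolding Th_def by (simp add: tcls_eq teq.sym Om_teq teq_some)

lemma Th_hom: "Th \<in> hom TE TG"
  unfolding hom_def
proof (intro CollectI conjI ballI Pi_I)
  fix x assume "x \<in> carrier TE"
  then show "Th x \<in> carrier TG" by (elim T_carrierE) (simp add: Th_cls T_carrierI Om_twf)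
next
  fix x y assume "x \<in> carrier TE" "y \<in> carrier TE"
  then show "Th (x \<otimes>\<^bsub>TE\<^esub> y) = Th x \<otimes>\<^bsub>TG\<^esub> Th y"
    by (elim T_carrierE) (simp add: Th_cls T_mult)
qed

lemma Th_gh: "group_hom TE TG Th"
  using Th_hom by (simp add: group_hom_def group_hom_axioms_def t.is_group tg.is_group)

lemma gen_one_l: assumes y: "y \<in> carrier G" shows "tcls G (TGen \<one>\<^bsub>G\<^esub> y) = \<one>\<^bsub>TG\<^esub>"
proof -
  have "teq G (TGen (\<one>\<^bsub>G\<^esub> \<otimes>\<^bsub>G\<^esub> \<one>\<^bsub>G\<^esub>) y)
     (TMul (TGen (mconj G \<one>\<^bsub>G\<^esub> \<one>\<^bsub>G\<^esub>) (mconj G \<one>\<^bsub>G\<^esub> y)) (TGen \<one>\<^bsub>G\<^esub> y))"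
    using y by (intro teq.rel2) simp_all
  then have "tcls G (TGen \<one>\<^bsub>G\<^esub> y) = tcls G (TGen \<one>\<^bsub>G\<^esub> y) \<otimes>\<^bsub>TG\<^esub> tcls G (TGen \<one>\<^bsub>G\<^esub> y)"
    using y by (simp add: mconj_def T_mult tcls_eq)
  then show ?thesis using y by (simp add: T_carrierI)
qed

lemma gen_one_r: assumes y: "y \<in> carrier G" shows "tcls G (TGen y \<one>\<^bsub>G\<^esub>) = \<one>\<^bsub>TG\<^esub>"
proof -
  have "teq G (TGen y (\<one>\<^bsub>G\<^esub> \<otimes>\<^bsub>G\<^esub> \<one>\<^bsub>G\<^esub>))
     (TMul (TGen y \<one>\<^bsub>G\<^esub>) (TGen (mconj G \<one>\<^bsub>G\<^esub> y) (mconj G \<one>\<^bsub>G\<^esub> \<one>\<^bsub>G\<^esub>)))"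
    using y by (intro teq.rel1) simp_all
  then have "tcls G (TGen y \<one>\<^bsub>G\<^esub>) = tcls G (TGen y \<one>\<^bsub>G\<^esub>) \<otimes>\<^bsub>TG\<^esub> tcls G (TGen y \<one>\<^bsub>G\<^esub>)"
    using y by (simp add: mconj_def T_mult tcls_eq)
  then show ?thesis using y by (simp add: T_carrierI)
qed

lemma Th_kills: assumes n: "n \<in> NT" shows "Th n = \<one>\<^bsub>TG\<^esub>"
proof -
  let ?K = "kernel TE TG Th"
  have K: "subgroup ?K TE" by (rule group_hom.subgroup_kernel[OF Th_gh])
  have L: "tens_left E ZE \<subseteq> ?K" unfolding tens_left_def
  proof (rule t.generate_subgroup_incl[OF _ K])
    show "{tgen E a b | a b. a \<in> ZE \<and> b \<in> carrier E} \<subseteq> ?K"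
    proof
      fix x assume "x \<in> {tgen E a b | a b. a \<in> ZE \<and> b \<in> carrier E}"
      then obtain a b where ab: "a \<in> ZE" "b \<in> carrier E" "x = tgen E a b" by blast
      have "pr a = \<one>\<^bsub>G\<^esub>" using ab by (simp add: pr_z)
      then show "x \<in> ?K" using ab e.zcalD(1)[of a]
        by (simp add: kernel_def tgen_def T_carrierI Th_cls Om_def gen_one_l pr)
    qed
  qed
  have R: "tens_right E ZE \<subseteq> ?K" unfolding tens_right_def
  proof (rule t.generate_subgroup_incl[OF _ K])
    show "{tgen E a b | a b. a \<in> carrier E \<and> b \<in> ZE} \<subseteq> ?K"
    proof
      fix x assume "x \<in> {tgen E a b | a b. a \<in> carrier E \<and> b \<in> ZE}"
      then obtain a b where ab: "a \<in> carrier E" "b \<in> ZE" "x = tgen E a b" by blast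
      have "pr b = \<one>\<^bsub>G\<^esub>" using ab by (simp add: pr_z)
      then show "x \<in> ?K" using ab e.zcalD(1)[of b]
        by (simp add: kernel_def tgen_def T_carrierI Th_cls Om_def gen_one_r pr)
    qed
  qed
  from n obtain l r where lr: "l \<in> tens_left E ZE" "r \<in> tens_right E ZE" "n = l \<otimes>\<^bsub>TE\<^esub> r"
    unfolding NZ set_mult_def by blast
  then have "l \<in> ?K" "r \<in> ?K" using L R by auto
  then show ?thesis using lr by (simp add: kernel_def hom_mult[OF Th_hom])
qed

end


context setting
begin

definition cN :: "'e tterm \<Rightarrow> 'e tterm set set" where "cN t = NT #>\<^bsub>TE\<^esub> tcls E t"
definition Rz :: "'e \<Rightarrow> 'e \<Rightarrow> bool" where
  "Rz a a' \<longleftrightarrow> a \<in> carrier E \<and> a' \<in> carrier E \<and> ZE #>\<^bsub>E\<^esub> a = ZE #>\<^bsub>E\<^esub> a'"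

interpretation e: mla E by unfold_locales (rule E)
interpretation g: mla G by unfold_locales (rule G)
interpretation t: mla "tensor_sq E" by unfold_locales (rule T_mla)
interpretation tg: group "tensor_sq G" by (rule T_group)

lemma cN_mul: "twf (carrier E) a \<Longrightarrow> twf (carrier E) b \<Longrightarrow> cN (TMul a b) = cN a <#>\<^bsub>TE\<^esub> cN b"
  unfolding cN_def by (simp add: t.QM_mult' T_carrierI flip: T_mult)

lemma cN_inv: "twf (carrier E) a \<Longrightarrow> cN (TInv a) = inv\<^bsub>t.QM\<^esub> (cN a)"
  unfolding cN_def by (simp add: t.QM_inv_coset T_carrierI flip: T_inv)

lemma cN_star: "twf (carrier E) a \<Longrightarrow> twf (carrier E) b \<Longrightarrow> cN (TStar a b) = lstar t.QM (cN a) (cN b)"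
  unfolding cN_def by (simp add: t.QM_star T_carrierI flip: T_star)

lemma cN_teq: "teq E a b \<Longrightarrow> cN a = cN b"
  unfolding cN_def by (subst tcls_eq[THEN iffD2]) auto

lemma tgenN_l: assumes z: "z \<in> ZE" and b: "b \<in> carrier E" shows "tcls E (TGen z b) \<in> NT"
proof -
  have "tcls E (TGen z b) \<in> tens_left E ZE"
    unfolding tens_left_def tgen_def using z b by (blast intro: generate.incl)
  moreover have "\<one>\<^bsub>TE\<^esub> \<in> tens_right E ZE" unfolding tens_right_def by (rule generate.one)
  moreover have "tcls E (TGen z b) \<otimes>\<^bsub>TE\<^esub> \<one>\<^bsub>TE\<^esub> = tcls E (TGen z b)"
    using z b e.zcalD(1)[of z] by (simp add: T_carrierI)
  ultimately show ?thesis unfolding NZ set_mult_def by force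
qed

lemma tgenN_r: assumes a: "a \<in> carrier E" and z: "z \<in> ZE" shows "tcls E (TGen a z) \<in> NT"
proof -
  have "tcls E (TGen a z) \<in> tens_right E ZE"
    unfolding tens_right_def tgen_def using z a by (blast intro: generate.incl)
  moreover have "\<one>\<^bsub>TE\<^esub> \<in> tens_left E ZE" unfolding tens_left_def by (rule generate.one)
  moreover have "\<one>\<^bsub>TE\<^esub> \<otimes>\<^bsub>TE\<^esub> tcls E (TGen a z) = tcls E (TGen a z)"
    using z a e.zcalD(1)[of z] by (simp add: T_carrierI)
  ultimately show ?thesis unfolding NZ set_mult_def by force
qed

lemma absorb: assumes n: "n \<in> NT" and x: "x \<in> carrier TE"
  shows "NT #>\<^bsub>TE\<^esub> (n \<otimes>\<^bsub>TE\<^esub> x) = NT #>\<^bsub>TE\<^esub> x" "NT #>\<^bsub>TE\<^esub> (x \<otimes>\<^bsub>TE\<^esub> n) = NT #>\<^bsub>TE\<^esub> x"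
proof -
  have nc: "n \<in> carrier TE" using n t.zcalD(1) by blast
  have "NT #>\<^bsub>TE\<^esub> (n \<otimes>\<^bsub>TE\<^esub> x) = (NT #>\<^bsub>TE\<^esub> n) #>\<^bsub>TE\<^esub> x"
    using nc x by (simp add: t.coset_mult_assoc subgroup.subset[OF t.zcal_subgroup])
  also have "NT #>\<^bsub>TE\<^esub> n = NT" using nc n by (simp add: t.coset_join2 t.zcal_subgroup)
  finally show 1: "NT #>\<^bsub>TE\<^esub> (n \<otimes>\<^bsub>TE\<^esub> x) = NT #>\<^bsub>TE\<^esub> x" .
  show "NT #>\<^bsub>TE\<^esub> (x \<otimes>\<^bsub>TE\<^esub> n) = NT #>\<^bsub>TE\<^esub> x" using 1 t.zcalD'[OF n x] by simp
qed

lemma gen_zl: assumes z: "z \<in> ZE" and a: "a \<in> carrier E" and b: "b \<in> carrier E"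
  shows "cN (TGen (z \<otimes>\<^bsub>E\<^esub> a) b) = cN (TGen a b)"
proof -
  have zc: "z \<in> carrier E" using z e.zcalD(1) by blast
  have "teq E (TGen (z \<otimes>\<^bsub>E\<^esub> a) b) (TMul (TGen (mconj E z a) (mconj E z b)) (TGen z b))"
    using zc a b by (intro teq.rel2)
  then have "tcls E (TGen (z \<otimes>\<^bsub>E\<^esub> a) b) = tcls E (TGen a b) \<otimes>\<^bsub>TE\<^esub> tcls E (TGen z b)"
    using z a b by (simp add: mconj_def e.zcal_conj T_mult tcls_eq)
  then show ?thesis unfolding cN_def
    using absorb(2)[OF tgenN_l[OF z b], of "tcls E (TGen a b)"] a b by (simp add: T_carrierI)
qed

lemma gen_zr: assumes z: "z \<in> ZE" and a: "a \<in> carrier E" and b: "b \<in> carrier E"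
  shows "cN (TGen a (z \<otimes>\<^bsub>E\<^esub> b)) = cN (TGen a b)"
proof -
  have zc: "z \<in> carrier E" using z e.zcalD(1) by blast
  have "teq E (TGen a (z \<otimes>\<^bsub>E\<^esub> b)) (TMul (TGen a z) (TGen (mconj E z a) (mconj E z b)))"
    using zc a b by (intro teq.rel1)
  then have "tcls E (TGen a (z \<otimes>\<^bsub>E\<^esub> b)) = tcls E (TGen a z) \<otimes>\<^bsub>TE\<^esub> tcls E (TGen a b)"
    using z a b by (simp add: mconj_def e.zcal_conj T_mult tcls_eq)
  then show ?thesis unfolding cN_def
    using absorb(1)[OF tgenN_r[OF a z], of "tcls E (TGen a b)"] a b by (simp add: T_carrierI)
qed

lemma coset_elem: assumes "Rz a a'" obtains z where "z \<in> ZE" "a' = z \<otimes>\<^bsub>E\<^esub> a"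
proof -
  have "a' \<in> ZE #>\<^bsub>E\<^esub> a" using assms unfolding Rz_def
    by (intro e.repr_independenceD[OF e.zcal_subgroup]) auto
  then show ?thesis using that unfolding r_coset_def by blast
qed

lemma gen_R: assumes "Rz a a'" "Rz b b'" shows "cN (TGen a b) = cN (TGen a' b')"
proof -
  obtain z where z: "z \<in> ZE" "a' = z \<otimes>\<^bsub>E\<^esub> a" using assms(1) by (rule coset_elem)
  obtain w where w: "w \<in> ZE" "b' = w \<otimes>\<^bsub>E\<^esub> b" using assms(2) by (rule coset_elem)
  have c: "a \<in> carrier E" "b \<in> carrier E" "a' \<in> carrier E" using assms by (auto simp: Rz_def)
  have "cN (TGen a' b') = cN (TGen a b')" using z c w e.zcalD(1)[of w] gen_zl by simp
  also have "\<dots> = cN (TGen a b)" using w c gen_zr by simp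
  finally show ?thesis by simp
qed

lemma tapx_cN: "tapx Rz s t \<Longrightarrow> twf (carrier E) s \<and> twf (carrier E) t \<and> cN s = cN t"
proof (induction rule: tapx.induct)
  case (tg a a' b b')
  then show ?case using gen_R[of a a' b b'] by (auto simp: Rz_def)
next
  case t1 then show ?case by simp
next
  case (tm s s' t t') then show ?case by (simp add: cN_mul)
next
  case (ti s s') then show ?case by (simp add: cN_inv)
next
  case (ts s s' t t') then show ?case by (simp add: cN_star)
qed

lemma chain: "tapx Rz A A' \<Longrightarrow> teq E A' B' \<Longrightarrow> tapx Rz B' B \<Longrightarrow> cN A = cN B"
  using tapx_cN cN_teq by metis

end


context setting
begin

definition Ps :: "'a tterm set \<Rightarrow> 'e tterm set set" where "Ps A = cN (Ph (SOME a. a \<in> A))"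

interpretation e: mla E by unfold_locales (rule E)
interpretation g: mla G by unfold_locales (rule G)
interpretation t: mla "tensor_sq E" by unfold_locales (rule T_mla)
interpretation tg: group "tensor_sq G" by (rule T_group)

lemma push_cm: "x \<in> carrier E \<Longrightarrow> y \<in> carrier E \<Longrightarrow> ZE #>\<^bsub>E\<^esub> (x \<otimes>\<^bsub>E\<^esub> y) = (ZE #>\<^bsub>E\<^esub> x) <#>\<^bsub>E\<^esub> (ZE #>\<^bsub>E\<^esub> y)"
  by (simp add: e.QM_mult')
lemma push_ci: "x \<in> carrier E \<Longrightarrow> ZE #>\<^bsub>E\<^esub> (inv\<^bsub>E\<^esub> x) = inv\<^bsub>QE\<^esub> (ZE #>\<^bsub>E\<^esub> x)"
  by (simp add: e.QM_inv_coset)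
lemma push_cs: "x \<in> carrier E \<Longrightarrow> y \<in> carrier E \<Longrightarrow> ZE #>\<^bsub>E\<^esub> (lstar E x y) = lstar QE (ZE #>\<^bsub>E\<^esub> x) (ZE #>\<^bsub>E\<^esub> y)"
  by (simp add: e.QM_star)
lemma push_rep: "g \<in> carrier G \<Longrightarrow> ZE #>\<^bsub>E\<^esub> rep g = \<phi> g"
  by (simp add: rep)
lemma phi_mult': "x \<in> carrier G \<Longrightarrow> y \<in> carrier G \<Longrightarrow> \<phi> (x \<otimes>\<^bsub>G\<^esub> y) = \<phi> x <#>\<^bsub>E\<^esub> \<phi> y"
  using phi_mult by simp

lemmas pushes = push_cm push_ci push_cs push_rep phi_mult' phi_inv phi_star rep(1) mconj_def Rz_def

lemma Ps_wd: "teq G s t \<Longrightarrow> cN (Ph s) = cN (Ph t)"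
proof (induction rule: teq.induct)
  case (cong_mul s s' t t') then show ?case by (simp add: cN_mul Ph_twf)
next
  case (cong_inv s s') then show ?case by (simp add: cN_inv Ph_twf)
next
  case (cong_star s s' t t') then show ?case by (simp add: cN_star Ph_twf)
next
  case (assoc x y z) then show ?case by (simp add: cN_teq teq.assoc)
next
  case (lunit x) then show ?case by (simp add: cN_teq teq.lunit)
next
  case (linv x) then show ?case by (simp add: cN_teq teq.linv)
next
  case (ax1 x) then show ?case by (simp add: cN_teq teq.ax1)
next
  case (ax2 x y z) then show ?case by (simp add: cN_teq teq.ax2)
next
  case (ax3 x y z) then show ?case by (simp add: cN_teq teq.ax3)
next
  case (ax4 x y z) then show ?case by (simp add: cN_teq teq.ax4)
next
  case (ax5 x y z) then show ?case by (simp add: cN_teq teq.ax5)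
next
  case (rel1 x y y')
  then show ?case
    by (intro chain[OF _ teq.rel1[of "rep x" E "rep y" "rep y'"]])
      (auto intro!: tapx.intros simp: Ph_def pushes)
next
  case (rel2 x x' y)
  then show ?case
    by (intro chain[OF _ teq.rel2[of "rep x" E "rep x'" "rep y"]])
      (auto intro!: tapx.intros simp: Ph_def pushes)
next
  case (rel3 x x' y)
  then show ?case
    by (intro chain[OF _ teq.rel3[of "rep x" E "rep x'" "rep y"]])
      (auto intro!: tapx.intros simp: Ph_def pushes)
next
  case (rel4 x y y')
  then show ?case
    by (intro chain[OF _ teq.rel4[of "rep x" E "rep y" "rep y'"]])
      (auto intro!: tapx.intros simp: Ph_def pushes)
next
  case (rel5 x y x' y')
  then show ?case
    by (intro chain[OF _ teq.rel5[of "rep x" E "rep y" "rep x'" "rep y'"]])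
      (auto intro!: tapx.intros simp: Ph_def pushes)
qed simp_all

end


context setting
begin

interpretation e: mla E by unfold_locales (rule E)
interpretation g: mla G by unfold_locales (rule G)
interpretation t: mla "tensor_sq E" by unfold_locales (rule T_mla)
interpretation tg: group "tensor_sq G" by (rule T_group)

lemma Ps_cls: "Ps (tcls G s) = cN (Ph s)"
  unfolding Ps_def by (rule Ps_wd) (rule teq.sym[OF teq_some])

lemma PhOm: "twf (carrier E) t \<Longrightarrow> tapx Rz (Ph (Om t)) t"
proof (induction t)
  case (TGen a b)
  then show ?case by (auto intro!: tapx.intros simp: Om_def Ph_def Rz_def pr rep)
qed (auto intro: tapx.intros)

lemma NT_sub: "NT \<subseteq> carrier TE"
  using subgroup.subset[OF t.zcal_subgroup] .

lemma cN_closed: "cN t \<in> rcosets\<^bsub>TE\<^esub> NT" if "twf (carrier E) t"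
  unfolding cN_def using that by (intro t.rcosetsI NT_sub T_carrierI)

lemma Ps_inj: assumes s: "twf (carrier G) s" and u: "twf (carrier G) u" and eq: "cN (Ph s) = cN (Ph u)"
  shows "tcls G s = tcls G u"
proof -
  let ?x = "tcls E (Ph s)" and ?y = "tcls E (Ph u)"
  have xc: "?x \<in> carrier TE" and yc: "?y \<in> carrier TE" by (simp_all add: T_carrierI Ph_twf)
  have "?x \<in> NT #>\<^bsub>TE\<^esub> ?y"
    using eq unfolding cN_def by (intro t.repr_independenceD[OF t.zcal_subgroup xc]) simp
  then obtain n where n: "n \<in> NT" "?x = n \<otimes>\<^bsub>TE\<^esub> ?y" unfolding r_coset_def by blast
  have nc: "n \<in> carrier TE" using n NT_sub by blast
  have "Th ?x = Th n \<otimes>\<^bsub>TG\<^esub> Th ?y" using n(2) hom_mult[OF Th_hom nc yc] by simp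
  also have "\<dots> = Th ?y" using Th_kills[OF n(1)] hom_in_carrier[OF Th_hom yc] by simp
  finally show ?thesis using s u by (simp add: Th_cls Om_Ph)
qed

lemma Ps_iso: "Ps \<in> mlie_iso TG (mlie_quot TE NT)"
  unfolding mlie_iso_def iso_def hom_def bij_betw_def
proof (intro CollectI conjI ballI Pi_I inj_onI)
  fix x assume "x \<in> carrier TG"
  then show "Ps x \<in> carrier (mlie_quot TE NT)"
    by (elim T_carrierE) (simp add: Ps_cls cN_closed Ph_twf)
next
  fix x y assume "x \<in> carrier TG" "y \<in> carrier TG"
  then show "Ps (x \<otimes>\<^bsub>TG\<^esub> y) = Ps x \<otimes>\<^bsub>mlie_quot TE NT\<^esub> Ps y"
    by (elim T_carrierE) (simp add: Ps_cls T_mult cN_mul Ph_twf)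
next
  fix x y assume "x \<in> carrier TG" "y \<in> carrier TG"
  then show "Ps (lstar TG x y) = lstar (mlie_quot TE NT) (Ps x) (Ps y)"
    by (elim T_carrierE) (simp add: Ps_cls T_star cN_star Ph_twf)
next
  fix x y assume x: "x \<in> carrier TG" and y: "y \<in> carrier TG" and eq: "Ps x = Ps y"
  from x obtain a where a: "twf (carrier G) a" "x = tcls G a" by (auto elim: T_carrierE)
  from y obtain b where b: "twf (carrier G) b" "y = tcls G b" by (auto elim: T_carrierE)
  show "x = y" using Ps_inj[OF a(1) b(1)] eq a b by (simp add: Ps_cls)
next
  show "Ps ` carrier TG = carrier (mlie_quot TE NT)"
  proof (intro equalityI subsetI)
    fix Y assume "Y \<in> Ps ` carrier TG"
    then show "Y \<in> carrier (mlie_quot TE NT)"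
      by (auto elim!: T_carrierE simp: Ps_cls cN_closed Ph_twf)
  next
    fix Y assume "Y \<in> carrier (mlie_quot TE NT)"
    then obtain x where x: "x \<in> carrier TE" "Y = NT #>\<^bsub>TE\<^esub> x" by (auto simp: RCOSETS_def)
    then obtain t where t: "twf (carrier E) t" "x = tcls E t" by (auto elim: T_carrierE)
    have "Ps (tcls G (Om t)) = cN t"
      using tapx_cN[OF PhOm[OF t(1)]] by (simp add: Ps_cls)
    moreover have "tcls G (Om t) \<in> carrier TG" by (simp add: T_carrierI Om_twf)
    ultimately show "Y \<in> Ps ` carrier TG" using x t unfolding cN_def by force
  qed
qed

end



theorem proposition3p6:
  fixes G :: "'a mlie" and E :: "'e mlie"
  assumes "mult_lie_alg G" and "mult_lie_alg E"
    and "mlie_is_iso G (mlie_quot E (zcal E))"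
    and "zcal (tensor_sq E) =
           tens_left E (zcal E) <#>\<^bsub>tensor_sq E\<^esub> tens_right E (zcal E)"
  shows "lie_capable_in TYPE('e tterm set) (tensor_sq G)"
proof -
  from assms(3) obtain \<phi> where phi: "\<phi> \<in> mlie_iso G (mlie_quot E (zcal E))"
    unfolding mlie_is_iso_def by blast
  interpret s: setting G E \<phi> using assms phi by unfold_locales auto
  have "mlie_is_iso (tensor_sq G) (mlie_quot (tensor_sq E) (zcal (tensor_sq E)))"
    using s.Ps_iso unfolding mlie_is_iso_def by blast
  then show ?thesis unfolding lie_capable_in_def using T_mla by blast
qed



end
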